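(* Consider $N$ nodes communicating over a fixed, undirected, connected graph $\mathcal{G}=(\mathcal{V},\mathcal{E})$ with $\mathcal{V}=\{1,\dots,N\}$ and diameter $d_G$, running the asynchronous distributed logic-AND algorithm described in the context. Assume that for each node $i$ there exists $\bar T_i$ such that the waiting time satisfies $T_i\le \bar T_i$ in every awakening cycle. Suppose that when a flag $C_i$ switches from $0$ to $1$, it remains equal to $1$ indefinitely. Then a node $i$ satisfies $\prod_{b=1}^{d_i}S_i[d_G,b]=1$ in finite time if and only if at a certain time instant one has $C_j=1$ for all $j\in\mathcal{V}$.
   Context: Notation: $\mathcal{N}_i=\{j\in\mathcal{V}:(i,j)\in\mathcal{E}\}\cup\{i\}$ is the set of neighbors of node $i$ including $i$ itself, and $d_i=|\mathcal{N}_i|$. For a matrix $A$, $A[l,j]$ is its $(l,j)$ entry, $A[:,j]$ its $j$-th column, $A[l,:]$ its $l$-th row; writing $A[l,:]\gets 1$ sets all entries of row $l$ to $1$. Asynchronous communication model: each node has a local clock $\tau_i$ and a waiting time $T_i$. While $\tau_i<T_i$ the node is IDLE (it listens for messages from neighbors and may update local variables). When $\tau_i=T_i$ it becomes AWAKE, performs local computations, broadcasts information to its neighbors, resets $\tau_i=0$ and selects a new waiting time $T_i$. Logic-AND algorithm: each node $i$ has a flag $C_i\in\{0,1\}$, initially $0$, and a matrix $S_i\in\{0,1\}^{d_G\times d_i}$, initially zero. The columns of $S_i$ are indexed by the neighbors: node $i$ assigns to each $j\in\mathcal{N}_i\setminus\{i\}$ a column index $j|_i$, and column $d_i$ refers to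 node $i$ itself. When AWAKE, node $i$ does: if $\prod_{l=1}^{d_i}S_i[d_G,l]\neq 1$, set $S_i[1,d_i]\gets C_i$, then set $S_i[l,d_i]\gets\prod_{b=1}^{d_i}S_i[l-1,b]$ for $l=2,\dots,d_G$, and broadcast the column $S_i[:,d_i]$ to all $j\in\mathcal{N}_i\setminus\{i\}$. Then, if $\prod_{l=1}^{d_i}S_i[d_G,l]=1$, node $i$ stops and sends a STOP signal to all $j\in\mathcal{N}_i\setminus\{i\}$. When IDLE, node $i$ does: if a column $S_j[:,d_j]$ is received from $j\in\mathcal{N}_i\setminus\{i\}$ and no STOP signal has been received, set $S_i[l,j|_i]\gets S_j[l,d_j]$ for $l=1,\dots,d_G$; if a STOP signal is received, set $S_i[d_G,:]\gets 1$. *)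

theory Defs
  imports Main
begin

definition undirected_graph :: "('v \<Rightarrow> 'v \<Rightarrow> bool) \<Rightarrow> bool" where
  "undirected_graph E \<longleftrightarrow> (\<forall>u v. E u v \<longrightarrow> E v u) \<and> (\<forall>u. \<not> E u u)"

definition edges :: "('v \<Rightarrow> 'v \<Rightarrow> bool) \<Rightarrow> ('v \<times> 'v) set" where
  "edges E = {(a, b). E a b}"

definition connected_graph :: "('v \<Rightarrow> 'v \<Rightarrow> bool) \<Rightarrow> bool" where
  "connected_graph E \<longleftrightarrow> (\<forall>u v. (u, v) \<in> (edges E)\<^sup>*)"

definition gdist :: "('v \<Rightarrow> 'v \<Rightarrow> bool) \<Rightarrow> 'v \<Rightarrow> 'v \<Rightarrow> nat" where
  "gdist E u v = (LEAST k. (u, v) \<in> (edges E) ^^ k)"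

definition diam :: "('v::finite \<Rightarrow> 'v \<Rightarrow> bool) \<Rightarrow> nat" where
  "diam E = Max {gdist E u v | u v. True}"

definition nbrs :: "('v \<Rightarrow> 'v \<Rightarrow> bool) \<Rightarrow> 'v \<Rightarrow> 'v set" where
  "nbrs E i = {j. E i j} \<union> {i}"

text \<open>The matrix S_i is represented as a function M :: nat => 'v => nat, where M l b is the
entry in row l (1 <= l <= d_G) and in the column belonging to neighbour b of N_i;
the column of i itself plays the role of column d_i.  Entries outside rows 1..d_G and
outside N_i are never used.\<close>

record 'v lstate =
  Smat    :: "'v \<Rightarrow> nat \<Rightarrow> 'v \<Rightarrow> nat"
  stopped :: "'v \<Rightarrow> bool"
  stoprcv :: "'v \<Rightarrow> bool"

definition init_state :: "'v lstate" where
  "init_state = \<lparr> Smat = (\<lambda>i l b. 0), stopped = (\<lambda>i. False), stoprcv = (\<lambda>i. False) \<rparr>"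

definition prodrow :: "('v \<Rightarrow> 'v \<Rightarrow> bool) \<Rightarrow> 'v \<Rightarrow> (nat \<Rightarrow> 'v \<Rightarrow> nat) \<Rightarrow> nat \<Rightarrow> nat" where
  "prodrow E i M l = (\<Prod>b\<in>nbrs E i. M l b)"

text \<open>New own column computed by an awake node (sequential update:
S_i[1,d_i] := C_i, then S_i[l,d_i] := prod_b S_i[l-1,b] for l = 2..d_G, where
the product already uses the updated entry S_i[l-1,d_i]).\<close>

fun newcol :: "('v \<Rightarrow> 'v \<Rightarrow> bool) \<Rightarrow> 'v \<Rightarrow> nat \<Rightarrow> (nat \<Rightarrow> 'v \<Rightarrow> nat) \<Rightarrow> nat \<Rightarrow> nat" where
  "newcol E i c M 0 = M 0 i"
| "newcol E i c M (Suc 0) = c"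
| "newcol E i c M (Suc (Suc l)) =
     (\<Prod>b\<in>nbrs E i - {i}. M (Suc l) b) * newcol E i c M (Suc l)"

definition awake_mat ::
  "('v \<Rightarrow> 'v \<Rightarrow> bool) \<Rightarrow> nat \<Rightarrow> 'v \<Rightarrow> nat \<Rightarrow> (nat \<Rightarrow> 'v \<Rightarrow> nat) \<Rightarrow> (nat \<Rightarrow> 'v \<Rightarrow> nat)" where
  "awake_mat E dG i c M =
     (if prodrow E i M dG \<noteq> 1
      then (\<lambda>l b. if b = i \<and> 1 \<le> l \<and> l \<le> dG then newcol E i c M l else M l b)
      else M)"

text \<open>W i: node i is AWAKE in the current time step; c i: current value of its flag C_i.\<close>

definition after_awake ::
  "('v \<Rightarrow> 'v \<Rightarrow> bool) \<Rightarrow> nat \<Rightarrow> ('v \<Rightarrow> bool) \<Rightarrow> ('v \<Rightarrow> nat) \<Rightarrow> 'v lstate \<Rightarrow> 'v \<Rightarrow> (nat \<Rightarrow> 'v \<Rightarrow> nat)" where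
  "after_awake E dG W c st i =
     (if W i \<and> \<not> stopped st i then awake_mat E dG i (c i) (Smat st i) else Smat st i)"

definition sends_col ::
  "('v \<Rightarrow> 'v \<Rightarrow> bool) \<Rightarrow> nat \<Rightarrow> ('v \<Rightarrow> bool) \<Rightarrow> 'v lstate \<Rightarrow> 'v \<Rightarrow> bool" where
  "sends_col E dG W st i \<longleftrightarrow> W i \<and> \<not> stopped st i \<and> prodrow E i (Smat st i) dG \<noteq> 1"

definition sends_stop ::
  "('v \<Rightarrow> 'v \<Rightarrow> bool) \<Rightarrow> nat \<Rightarrow> ('v \<Rightarrow> bool) \<Rightarrow> ('v \<Rightarrow> nat) \<Rightarrow> 'v lstate \<Rightarrow> 'v \<Rightarrow> bool" where
  "sends_stop E dG W c st i \<longleftrightarrow>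
     W i \<and> \<not> stopped st i \<and> prodrow E i (after_awake E dG W c st i) dG = 1"

text \<open>One time step: first the awake nodes compute and broadcast; then every node
that has not stopped processes (in its IDLE phase) the messages broadcast in this step.
A stopped node no longer changes its state.\<close>

definition step ::
  "('v \<Rightarrow> 'v \<Rightarrow> bool) \<Rightarrow> nat \<Rightarrow> ('v \<Rightarrow> bool) \<Rightarrow> ('v \<Rightarrow> nat) \<Rightarrow> 'v lstate \<Rightarrow> 'v lstate" where
  "step E dG W c st =
    (let A = after_awake E dG W c st;
         stp = (\<lambda>i. stopped st i \<or> sends_stop E dG W c st i);
         newstop = (\<lambda>j. \<exists>i. E j i \<and> sends_stop E dG W c st i);
         rcv = (\<lambda>j. stoprcv st j \<or> (\<not> stp j \<and> newstop j))
     in \<lparr> Smat = (\<lambda>j l b.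
              if stp j then A j l b
              else if l = dG \<and> newstop j then 1
              else if E j b \<and> sends_col E dG W st b \<and> \<not> rcv j \<and> 1 \<le> l \<and> l \<le> dG
                then A b l b
              else A j l b),
          stopped = stp,
          stoprcv = rcv \<rparr>)"

text \<open>The execution: W t is the set of nodes awake at time t, C t j the value of flag C_j
at time t.  exec ... t is the state before the step at time t.\<close>

primrec exec ::
  "('v \<Rightarrow> 'v \<Rightarrow> bool) \<Rightarrow> nat \<Rightarrow> (nat \<Rightarrow> 'v \<Rightarrow> bool) \<Rightarrow> (nat \<Rightarrow> 'v \<Rightarrow> nat) \<Rightarrow> nat \<Rightarrow> 'v lstate" where
  "exec E dG W C 0 = init_state"
| "exec E dG W C (Suc t) = step E dG (W t) (C t) (exec E dG W C t)"

end

theory Submission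
  imports Defs
begin

lemma newcol_ge:
  assumes "M 1 j \<le> cj"
    and "\<forall>k. 2 \<le> k \<and> k \<le> dG \<longrightarrow> M k j \<le> (\<Prod>b\<in>nbrs E j - {j}. M (k-1) b) * M (k-1) j"
  shows "1 \<le> k \<Longrightarrow> k \<le> dG \<Longrightarrow> M k j \<le> newcol E j cj M k"
proof (induction k)
  case 0 then show ?case by simp
next
  case (Suc k)
  show ?case
  proof (cases k)
    case 0 then show ?thesis using assms by simp
  next
    case (Suc l)
    have "M (Suc k) j \<le> (\<Prod>b\<in>nbrs E j - {j}. M k b) * M k j"
      using assms(2)[rule_format, of "Suc k"] Suc.prems Suc by simp
    also have "\<dots> \<le> (\<Prod>b\<in>nbrs E j - {j}. M k b) * newcol E j cj M k"
      using Suc.IH Suc.prems Suc by (simp add: mult_left_mono)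
    finally show ?thesis using Suc by simp
  qed
qed

lemma newcol_le1:
  assumes "cj \<le> 1" "\<forall>l b. M l b \<le> (1::nat)"
  shows "newcol E j cj M k \<le> 1"
proof (induction k rule: nat_less_induct)
  case (1 n)
  show ?case
  proof (cases n)
    case 0 then show ?thesis using assms by simp
  next
    case (Suc k) show ?thesis
    proof (cases k)
      case 0 then show ?thesis using Suc assms by simp
    next
      case (Suc l)
      have "(\<Prod>b\<in>nbrs E j - {j}. M (Suc l) b) \<le> 1" by (rule prod_le_1) (use assms in auto)
      moreover have "newcol E j cj M (Suc l) \<le> 1" using 1 Suc \<open>n = Suc k\<close> by auto
      ultimately show ?thesis using Suc \<open>n = Suc k\<close> by (simp add: mult_le_one del: One_nat_def)
    qed
  qed
qed

lemma newcol_one: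
  assumes "cj = 1" "\<forall>b\<in>nbrs E j. \<forall>k'. 1 \<le> k' \<and> k' \<le> l \<longrightarrow> M k' b = (1::nat)"
  shows "1 \<le> k \<Longrightarrow> k \<le> Suc l \<Longrightarrow> newcol E j cj M k = 1"
proof (induction k)
  case 0 then show ?case by simp
next
  case (Suc k)
  show ?case
  proof (cases k)
    case 0 then show ?thesis using assms by simp
  next
    case (Suc m)
    have "(\<Prod>b\<in>nbrs E j - {j}. M k b) = 1"
      using assms(2) Suc \<open>Suc k \<le> Suc l\<close> by (simp add: prod_eq_1_iff)
    then show ?thesis using Suc.IH Suc.prems Suc by simp
  qed
qed


lemma step_simps:
 "stopped (step E dG w c st) j = (stopped st j \<or> sends_stop E dG w c st j)"
 "stoprcv (step E dG w c st) j = (stoprcv st j \<or> (\<not>(stopped st j \<or> sends_stop E dG w c st j) \<and> (\<exists>i. E j i \<and> sends_stop E dG w c st i)))"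
 "Smat (step E dG w c st) j l b = (if stopped st j \<or> sends_stop E dG w c st j then after_awake E dG w c st j l b
    else if l = dG \<and> (\<exists>i. E j i \<and> sends_stop E dG w c st i) then 1
    else if E j b \<and> sends_col E dG w st b \<and> \<not>(stoprcv st j \<or> (\<not>(stopped st j \<or> sends_stop E dG w c st j) \<and> (\<exists>i. E j i \<and> sends_stop E dG w c st i))) \<and> 1 \<le> l \<and> l \<le> dG
    then after_awake E dG w c st b l b else after_awake E dG w c st j l b)"
  by (simp_all add: step_def Let_def)

definition inv :: "('v \<Rightarrow> 'v \<Rightarrow> bool) \<Rightarrow> nat \<Rightarrow> ('v \<Rightarrow> nat) \<Rightarrow> 'v lstate \<Rightarrow> bool" where
 "inv E dG c st \<longleftrightarrow>
 (\<forall>j l b. Smat st j l b \<le> 1) \<and>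
 (\<forall>j. stoprcv st j \<longrightarrow> (\<forall>b. Smat st j dG b = 1)) \<and>
 (\<forall>j. stopped st j \<longrightarrow> prodrow E j (Smat st j) dG = 1) \<and>
 (\<forall>j b k. E j b \<and> 1 \<le> k \<and> k \<le> dG \<and> \<not>(k = dG \<and> stoprcv st j) \<longrightarrow> Smat st j k b \<le> Smat st b k b) \<and>
 (\<forall>j. \<not>stoprcv st j \<and> \<not> stopped st j \<longrightarrow> Smat st j 1 j \<le> c j \<and>
    (\<forall>k. 2 \<le> k \<and> k \<le> dG \<longrightarrow> Smat st j k j \<le> (\<Prod>b\<in>nbrs E j - {j}. Smat st j (k-1) b) * Smat st j (k-1) j))"

lemma inv_init: "inv E dG c init_state"
  by (simp add: inv_def init_state_def)

lemma rcv_prod: "inv E dG c st \<Longrightarrow> stoprcv st j \<Longrightarrow> prodrow E j (Smat st j) dG = 1"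
  by (simp add: inv_def prodrow_def)

lemma aa_other: "b \<noteq> j \<Longrightarrow> after_awake E dG w c st j k b = Smat st j k b"
  by (simp add: after_awake_def awake_mat_def)

lemma aa_done: "prodrow E j (Smat st j) dG = 1 \<Longrightarrow> after_awake E dG w c st j = Smat st j"
  by (simp add: after_awake_def awake_mat_def)

lemma aa_recomp: "w j \<Longrightarrow> \<not> stopped st j \<Longrightarrow> prodrow E j (Smat st j) dG \<noteq> 1 \<Longrightarrow> 1 \<le> k \<Longrightarrow> k \<le> dG \<Longrightarrow>
   after_awake E dG w c st j k j = newcol E j (c j) (Smat st j) k"
  by (simp add: after_awake_def awake_mat_def)

lemma aa_mono:
  assumes "inv E dG c st" "1 \<le> k" "k \<le> dG"
  shows "Smat st j k b \<le> after_awake E dG w c st j k b"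
proof (cases "w j \<and> \<not> stopped st j \<and> prodrow E j (Smat st j) dG \<noteq> 1 \<and> b = j")
  case True
  then have "\<not> stoprcv st j" using rcv_prod assms by metis
  then have "Smat st j 1 j \<le> c j"
    "\<forall>k. 2 \<le> k \<and> k \<le> dG \<longrightarrow> Smat st j k j \<le> (\<Prod>b\<in>nbrs E j - {j}. Smat st j (k-1) b) * Smat st j (k-1) j"
    using assms True unfolding inv_def by auto
  from newcol_ge[OF this, of k] True assms show ?thesis by (simp add: aa_recomp)
next
  case False
  then show ?thesis by (auto simp add: after_awake_def awake_mat_def)
qed

lemma aa_le1:
  assumes "inv E dG c st" "\<forall>j. c j \<le> 1"
  shows "after_awake E dG w c st j k b \<le> 1"
  using assms newcol_le1[of "c j" "Smat st j"]
  by (auto simp add: after_awake_def awake_mat_def inv_def)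

lemma step_mono:
  assumes "inv E dG c st" "\<forall>j. c j \<le> 1" "1 \<le> k" "k \<le> dG"
  shows "Smat st j k b \<le> Smat (step E dG w c st) j k b"
proof -
  have V: "\<forall>j l b. Smat st j l b \<le> 1" using assms unfolding inv_def by auto
  have R: "\<And>j b. E j b \<Longrightarrow> \<not> stoprcv st j \<Longrightarrow> Smat st j k b \<le> Smat st b k b"
    using assms unfolding inv_def by auto
  show ?thesis
    using aa_mono[OF assms(1,3,4), of j b w] aa_mono[OF assms(1,3,4), of b b w] V R[of j b]
    unfolding step_simps by (auto simp del: One_nat_def)
qed


lemma step_stp:
  "stopped st j \<or> sends_stop E dG w c st j \<Longrightarrow> Smat (step E dG w c st) j = after_awake E dG w c st j"
  by (rule ext)+ (simp add: step_simps)

lemma step_ge_own: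
  assumes "inv E dG c st" "\<forall>j. c j \<le> 1" "\<forall>u. \<not> E u u"
  shows "after_awake E dG w c st b k b \<le> Smat (step E dG w c st) b k b"
  using aa_le1[OF assms(1,2), of w b k b] assms(3) unfolding step_simps by auto

lemma inv_step:
  assumes I: "inv E dG c st" and cc: "\<forall>j. c j \<le> c' j" and c1: "\<forall>j. c' j \<le> 1" and irr: "\<forall>u. \<not> E u u"
  shows "inv E dG c' (step E dG w c st)"
proof -
  let ?S = "Smat (step E dG w c st)"
  let ?A = "after_awake E dG w c st"
  have c1': "\<forall>j. c j \<le> 1" using cc c1 order_trans by blast
  have V: "\<forall>j l b. Smat st j l b \<le> 1" using I unfolding inv_def by auto
  have Rold: "\<And>j b k. E j b \<Longrightarrow> 1 \<le> k \<Longrightarrow> k \<le> dG \<Longrightarrow> \<not>(k = dG \<and> stoprcv st j) \<Longrightarrow> Smat st j k b \<le> Smat st b k b"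
    using I unfolding inv_def by auto
  have Sold: "\<And>j b. stoprcv st j \<Longrightarrow> Smat st j dG b = 1" using I unfolding inv_def by auto
  have Told: "\<And>j. stopped st j \<Longrightarrow> prodrow E j (Smat st j) dG = 1" using I unfolding inv_def by auto
  have Oold: "\<And>j. \<not>stoprcv st j \<Longrightarrow> \<not> stopped st j \<Longrightarrow> Smat st j 1 j \<le> c j \<and>
    (\<forall>k. 2 \<le> k \<and> k \<le> dG \<longrightarrow> Smat st j k j \<le> (\<Prod>b\<in>nbrs E j - {j}. Smat st j (k-1) b) * Smat st j (k-1) j)"
    using I unfolding inv_def by auto
  have P1: "\<forall>j l b. ?S j l b \<le> 1"
    using aa_le1[OF I c1'] unfolding step_simps by auto
  have P2: "\<forall>j. stoprcv (step E dG w c st) j \<longrightarrow> (\<forall>b. ?S j dG b = 1)"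
  proof (intro allI impI)
    fix j b assume a: "stoprcv (step E dG w c st) j"
    show "?S j dG b = 1"
    proof (cases "stoprcv st j")
      case True
      then have "?A j = Smat st j" using aa_done rcv_prod[OF I] by metis
      then show ?thesis using Sold[OF True] True unfolding step_simps by auto
    next
      case False
      then show ?thesis using a unfolding step_simps by auto
    qed
  qed
  have P3: "\<forall>j. stopped (step E dG w c st) j \<longrightarrow> prodrow E j (?S j) dG = 1"
  proof (intro allI impI)
    fix j assume a: "stopped (step E dG w c st) j"
    then have s: "stopped st j \<or> sends_stop E dG w c st j" by (simp add: step_simps)
    then have e: "?S j = ?A j" by (rule step_stp)
    show "prodrow E j (?S j) dG = 1"
    proof (cases "stopped st j")
      case True then show ?thesis using e aa_done Told by metis
    next
      case False then show ?thesis using s e by (simp add: sends_stop_def)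
    qed
  qed
  have P4: "\<forall>j b k. E j b \<and> 1 \<le> k \<and> k \<le> dG \<and> \<not>(k = dG \<and> stoprcv (step E dG w c st) j) \<longrightarrow> ?S j k b \<le> ?S b k b"
  proof (intro allI impI, elim conjE)
    fix j b k assume e: "E j b" and k: "1 \<le> k" "k \<le> dG" and n: "\<not>(k = dG \<and> stoprcv (step E dG w c st) j)"
    have bj: "b \<noteq> j" using e irr by auto
    have lo: "?A b k b \<le> ?S b k b" using step_ge_own[OF I c1' irr] .
    have nr: "\<not>(k = dG \<and> stoprcv st j)" using n by (auto simp: step_simps)
    have "Smat st j k b \<le> ?A b k b"
      using Rold[OF e k nr] aa_mono[OF I k, of b b w] by linarith
    then have "?S j k b \<le> ?A b k b"
      using n aa_other[OF bj] unfolding step_simps by (auto split: if_splits)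
    then show "?S j k b \<le> ?S b k b" using lo by linarith
  qed
  have P5: "\<forall>j. \<not>stoprcv (step E dG w c st) j \<and> \<not> stopped (step E dG w c st) j \<longrightarrow> ?S j 1 j \<le> c' j \<and>
    (\<forall>k. 2 \<le> k \<and> k \<le> dG \<longrightarrow> ?S j k j \<le> (\<Prod>b\<in>nbrs E j - {j}. ?S j (k-1) b) * ?S j (k-1) j)"
  proof (intro allI impI, elim conjE)
    fix j assume a1: "\<not>stoprcv (step E dG w c st) j" and a2: "\<not> stopped (step E dG w c st) j"
    have nr: "\<not> stoprcv st j" "\<not> stopped st j" "\<not> sends_stop E dG w c st j"
      using a1 a2 by (auto simp: step_simps)
    have own: "\<And>k. ?S j k j = ?A j k j" using nr irr a1 unfolding step_simps by auto
    have O: "Smat st j 1 j \<le> c j"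
     "\<And>k. 2 \<le> k \<Longrightarrow> k \<le> dG \<Longrightarrow> Smat st j k j \<le> (\<Prod>b\<in>nbrs E j - {j}. Smat st j (k-1) b) * Smat st j (k-1) j"
      using Oold[OF nr(1,2)] by auto
    have mono: "\<And>k. 1 \<le> k \<Longrightarrow> k \<le> dG \<Longrightarrow> (\<Prod>b\<in>nbrs E j - {j}. Smat st j k b) \<le> (\<Prod>b\<in>nbrs E j - {j}. ?S j k b)"
      by (rule prod_mono) (use step_mono[OF I c1'] in auto)
    show "?S j 1 j \<le> c' j \<and> (\<forall>k. 2 \<le> k \<and> k \<le> dG \<longrightarrow> ?S j k j \<le> (\<Prod>b\<in>nbrs E j - {j}. ?S j (k-1) b) * ?S j (k-1) j)"
    proof (cases "w j \<and> prodrow E j (Smat st j) dG \<noteq> 1")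
      case True
      have r1: "?S j 1 j \<le> c' j"
      proof (cases "1 \<le> dG")
        case True2: True
        then show ?thesis using own aa_recomp[of w j st E dG 1 c] True nr cc by simp
      next
        case False
        then show ?thesis using own O(1) cc by (simp add: after_awake_def awake_mat_def) (meson order_trans)
      qed
      have rk: "?S j k j \<le> (\<Prod>b\<in>nbrs E j - {j}. ?S j (k-1) b) * ?S j (k-1) j" if k: "2 \<le> k" "k \<le> dG" for k
      proof -
        obtain m where m: "k = Suc (Suc m)" using k by (metis add_2_eq_Suc le_Suc_ex)
        have "?S j k j = (\<Prod>b\<in>nbrs E j - {j}. Smat st j (k-1) b) * ?A j (k-1) j"
          using own aa_recomp[of w j st E dG k c] aa_recomp[of w j st E dG "k-1" c] True nr k m by simp
        also have "\<dots> \<le> (\<Prod>b\<in>nbrs E j - {j}. ?S j (k-1) b) * ?S j (k-1) j"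
          using mono[of "k-1"] k own[of "k-1"] by (simp add: mult_right_mono)
        finally show ?thesis .
      qed
      show ?thesis using r1 rk by auto
    next
      case False
      then have Aeq: "?A j = Smat st j" by (auto simp: after_awake_def awake_mat_def)
      have r1: "?S j 1 j \<le> c' j" using own Aeq O(1) cc by (metis order_trans)
      have rk: "?S j k j \<le> (\<Prod>b\<in>nbrs E j - {j}. ?S j (k-1) b) * ?S j (k-1) j" if k: "2 \<le> k" "k \<le> dG" for k
      proof -
        have "?S j k j \<le> (\<Prod>b\<in>nbrs E j - {j}. Smat st j (k-1) b) * Smat st j (k-1) j"
          using own Aeq O(2)[OF k] by simp
        also have "\<dots> \<le> (\<Prod>b\<in>nbrs E j - {j}. ?S j (k-1) b) * ?S j (k-1) j"
          using mono[of "k-1"] k own[of "k-1"] Aeq by (simp add: mult_mono)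
        finally show ?thesis .
      qed
      show ?thesis using r1 rk by auto
    qed
  qed
  show ?thesis unfolding inv_def using P1 P2 P3 P4 P5 by blast
qed


lemma g0: "connected_graph E \<Longrightarrow> (u, v) \<in> edges E ^^ gdist E u v"
  unfolding gdist_def connected_graph_def
  by (rule LeastI_ex) (meson rtrancl_power)

lemma g1: "connected_graph E \<Longrightarrow> gdist E u v = 0 \<Longrightarrow> u = v"
  using g0[of E u v] by simp

lemma g2: assumes "connected_graph E" "gdist E b x = Suc m" shows "\<exists>y. E b y \<and> gdist E y x \<le> m"
proof -
  have "(b, x) \<in> edges E ^^ Suc m" using g0[OF assms(1), of b x] assms(2) by simp
  then obtain y where y1: "(b, y) \<in> edges E" and y2: "(y, x) \<in> edges E ^^ m" using relpow_Suc_D2 by metis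
  have "gdist E y x \<le> m" unfolding gdist_def by (rule Least_le) (rule y2)
  then show ?thesis using y1 by (auto simp: edges_def)
qed

lemma g3: "gdist E u v \<le> diam (E :: 'v::finite \<Rightarrow> 'v \<Rightarrow> bool)"
proof -
  have "{gdist E u v | u v. True} = (\<lambda>(u,v). gdist E u v) ` UNIV" by auto
  then have "finite {gdist E u v | u v. True}" by simp
  then show ?thesis unfolding diam_def by (rule Max_ge) auto
qed

lemma g4: assumes "connected_graph (E :: 'v::finite \<Rightarrow> 'v \<Rightarrow> bool)" "card (UNIV :: 'v set) \<ge> 2"
  shows "1 \<le> diam E"
proof -
  obtain u v :: 'v where "u \<noteq> v"
    using assms(2) by (metis card_le_Suc0_iff_eq finite_UNIV iso_tuple_UNIV_I not_less_eq_eq numeral_2_eq_2)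
  then have "gdist E u v \<noteq> 0" using g1[OF assms(1)] by blast
  then show ?thesis using g3[of E u v] by linarith
qed

definition sfm :: "('v \<Rightarrow> 'v \<Rightarrow> bool) \<Rightarrow> nat \<Rightarrow> ('v \<Rightarrow> bool) \<Rightarrow> (nat \<Rightarrow> 'v \<Rightarrow> nat) \<Rightarrow> bool" where
  "sfm E dG F M \<longleftrightarrow> (\<forall>k b. 1 \<le> k \<and> k \<le> dG \<and> M k b = 1 \<longrightarrow> (\<forall>x. gdist E b x < k \<longrightarrow> F x))"

lemma newcol_sf:
  fixes E :: "'v::finite \<Rightarrow> 'v \<Rightarrow> bool"
  assumes conn: "connected_graph E" and irr: "\<forall>u. \<not> E u u" and cF: "cj = 1 \<Longrightarrow> F j"
    and M: "\<And>k b. 1 \<le> k \<Longrightarrow> k < dG \<Longrightarrow> M k b = 1 \<Longrightarrow> b \<in> nbrs E j - {j} \<Longrightarrow> gdist E b x < k \<Longrightarrow> F x"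
  shows "newcol E j cj M k = (1::nat) \<Longrightarrow> 1 \<le> k \<Longrightarrow> k \<le> dG \<Longrightarrow> gdist E j x < k \<Longrightarrow> F x"
proof (induction k)
  case 0 then show ?case by simp
next
  case (Suc k)
  show ?case
  proof (cases k)
    case 0 then show ?thesis using Suc.prems cF g1[OF conn, of j x] by auto
  next
    case (Suc m)
    have h: "(\<Prod>b\<in>nbrs E j - {j}. M k b) = 1" "newcol E j cj M k = 1"
      using Suc.prems(1) Suc by (simp_all del: prod_eq_1_iff)
    show ?thesis
    proof (cases "gdist E j x < k")
      case True then show ?thesis using Suc.IH h Suc.prems Suc by simp
    next
      case False
      then have "gdist E j x = k" using Suc.prems by simp
      then obtain y where y: "E j y" "gdist E y x \<le> m" using g2[OF conn] Suc by metis
      have yn: "y \<in> nbrs E j - {j}" using y irr by (auto simp: nbrs_def)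
      have fin: "finite (nbrs E j - {j})" by simp
      have "M k y = 1" using h(1) yn prod_eq_1_iff[OF fin] by blast
      then show ?thesis using M[of k y] yn y Suc Suc.prems by simp
    qed
  qed
qed


lemma allF:
  fixes E :: "'v::finite \<Rightarrow> 'v \<Rightarrow> bool"
  assumes conn: "connected_graph E" and d1: "1 \<le> diam E" and sf: "sfm E (diam E) F M"
    and p: "prodrow E i M (diam E) = 1"
  shows "F x"
proof -
  have fin: "finite (nbrs E i)" by simp
  have one: "\<And>b. b \<in> nbrs E i \<Longrightarrow> M (diam E) b = 1" using p prod_eq_1_iff[OF fin] unfolding prodrow_def by blast
  have r: "\<And>b. b \<in> nbrs E i \<Longrightarrow> gdist E b x < diam E \<Longrightarrow> F x"
    using sf one d1 unfolding sfm_def by blast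
  show ?thesis
  proof (cases "gdist E i x < diam E")
    case True then show ?thesis using r[of i] by (simp add: nbrs_def)
  next
    case False
    then have "gdist E i x = diam E" using g3[of E i x] by simp
    then obtain m where "gdist E i x = Suc m" "m < diam E" using d1 by (intro that[of "diam E - 1"]) auto
    then obtain y where "E i y" "gdist E y x \<le> m" using g2[OF conn] by metis
    then show ?thesis using r[of y] \<open>m < diam E\<close> by (simp add: nbrs_def)
  qed
qed

lemma aa_val: "after_awake E dG w c st j k b =
  (if w j \<and> \<not> stopped st j \<and> prodrow E j (Smat st j) dG \<noteq> 1 \<and> b = j \<and> 1 \<le> k \<and> k \<le> dG
   then newcol E j (c j) (Smat st j) k else Smat st j k b)"
  by (simp add: after_awake_def awake_mat_def)

lemma sf_aa:
  fixes E :: "'v::finite \<Rightarrow> 'v \<Rightarrow> bool"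
  assumes conn: "connected_graph E" and irr: "\<forall>u. \<not> E u u"
    and sf: "sfm E dG F (Smat st j)" and cF: "c j = 1 \<Longrightarrow> F j"
  shows "sfm E dG F (after_awake E dG w c st j)"
  unfolding sfm_def
proof (intro allI impI, elim conjE)
  fix k b x assume k: "1 \<le> k" "k \<le> dG" and a: "after_awake E dG w c st j k b = 1" and g: "gdist E b x < k"
  show "F x"
  proof (cases "w j \<and> \<not> stopped st j \<and> prodrow E j (Smat st j) dG \<noteq> 1 \<and> b = j")
    case True
    have nc: "newcol E j (c j) (Smat st j) k = 1" using a k True by (simp add: aa_val)
    show ?thesis
    proof (rule newcol_sf[where E=E and cj="c j" and F=F and j=j and M="Smat st j" and dG=dG and x=x and k=k, OF conn irr cF])
      fix k' b' assume "1 \<le> k'" "k' < dG" "Smat st j k' b' = 1" "gdist E b' x < k'"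
      then show "F x" using sf unfolding sfm_def by (meson less_imp_le)
    qed (use nc k g True in auto)
  next
    case False
    then have "Smat st j k b = 1" using a by (simp add: aa_val split: if_splits)
    then show ?thesis using sf k g unfolding sfm_def by blast
  qed
qed

lemma sf_step:
  fixes E :: "'v::finite \<Rightarrow> 'v \<Rightarrow> bool"
  assumes conn: "connected_graph E" and irr: "\<forall>u. \<not> E u u" and d1: "1 \<le> diam E"
    and sf: "\<forall>j. sfm E (diam E) F (Smat st j)" and cF: "\<forall>j. c j = 1 \<longrightarrow> F j"
  shows "sfm E (diam E) F (Smat (step E (diam E) w c st) j)"
proof -
  have A: "\<And>j. sfm E (diam E) F (after_awake E (diam E) w c st j)"
    using sf_aa[OF conn irr] sf cF by blast
  show ?thesis
  proof (cases "\<exists>i. E j i \<and> sends_stop E (diam E) w c st i")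
    case True
    then obtain i where "sends_stop E (diam E) w c st i" by blast
    then have "prodrow E i (after_awake E (diam E) w c st i) (diam E) = 1" by (simp add: sends_stop_def)
    then have "\<forall>x. F x" using allF[OF conn d1 A] by blast
    then show ?thesis unfolding sfm_def by blast
  next
    case False
    then show ?thesis using A unfolding sfm_def step_simps
      by (smt (verit, ccfv_threshold))
  qed
qed


locale la =
  fixes E :: "'v::finite \<Rightarrow> 'v \<Rightarrow> bool" and W :: "nat \<Rightarrow> 'v \<Rightarrow> bool" and C :: "nat \<Rightarrow> 'v \<Rightarrow> nat"
    and Tbar :: "'v \<Rightarrow> nat"
  assumes und: "undirected_graph E" and conn: "connected_graph E" and card2: "card (UNIV :: 'v set) \<ge> 2"
    and C01: "\<forall>t j. C t j \<in> {0, 1}" and Cmono: "\<forall>t s j. t \<le> s \<longrightarrow> C t j = 1 \<longrightarrow> C s j = 1"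
    and wk: "\<forall>j t. \<exists>s. t \<le> s \<and> s < t + Tbar j \<and> W s j"
begin

abbreviation "D \<equiv> diam E"
abbreviation "X t \<equiv> exec E D W C t"

definition dn :: "nat \<Rightarrow> 'v \<Rightarrow> bool" where "dn t j \<longleftrightarrow> prodrow E j (Smat (X t) j) D = 1"

lemma irr: "\<forall>u. \<not> E u u" using und unfolding undirected_graph_def by auto
lemma symE: "E u v \<Longrightarrow> E v u" using und unfolding undirected_graph_def by auto
lemma D1: "1 \<le> D" using g4[OF conn card2] .

lemma C1: "C t j \<le> 1" using C01[rule_format, of t j] by auto
lemma Cle: "C t j \<le> C (Suc t) j"
  using C01[rule_format, of t j] Cmono[rule_format, of t "Suc t" j] by auto

lemma invX: "inv E D (C t) (X t)"
proof (induction t)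
  case 0 then show ?case by (simp add: inv_init)
next
  case (Suc t) then show ?case using inv_step[OF Suc, of "C (Suc t)" "W t"] Cle C1 irr by simp
qed

lemma monoX: assumes "1 \<le> k" "k \<le> D" "t \<le> s" shows "Smat (X t) j k b \<le> Smat (X s) j k b"
  using assms(3)
proof (induction s rule: dec_induct)
  case base then show ?case by simp
next
  case (step s)
  then show ?case using step_mono[OF invX[of s], of k j b "W s"] C1 assms by (simp add: order_trans)
qed

lemma leX: "Smat (X t) j k b \<le> 1" using invX[of t] unfolding inv_def by auto

lemma one_stable: "Smat (X t) j k b = 1 \<Longrightarrow> 1 \<le> k \<Longrightarrow> k \<le> D \<Longrightarrow> t \<le> s \<Longrightarrow> Smat (X s) j k b = 1"
  using monoX[of k t s j b] leX[of s j k b] by simp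

lemma dn_stable: assumes "dn t j" "t \<le> s" shows "dn s j"
proof -
  have fin: "finite (nbrs E j)" by simp
  have "\<forall>b\<in>nbrs E j. Smat (X t) j D b = 1" using assms(1) prod_eq_1_iff[OF fin] unfolding dn_def prodrow_def by blast
  then have "\<forall>b\<in>nbrs E j. Smat (X s) j D b = 1" using one_stable D1 assms(2) by blast
  then show ?thesis using prod_eq_1_iff[OF fin] unfolding dn_def prodrow_def by blast
qed

lemma stopped_dn: "stopped (X t) j \<Longrightarrow> dn t j" using invX[of t] unfolding inv_def dn_def by auto
lemma rcv_dn: "stoprcv (X t) j \<Longrightarrow> dn t j" using rcv_prod[OF invX[of t]] unfolding dn_def by auto

lemma stop_nb:
  assumes "sends_stop E D (W t) (C t) (X t) j" "E j' j"
  shows "dn (Suc t) j'"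
proof -
  have "stopped (X (Suc t)) j' \<or> stoprcv (X (Suc t)) j'" using assms symE by (auto simp: step_simps)
  then show ?thesis using stopped_dn rcv_dn by blast
qed

lemma stop_self: "sends_stop E D (W t) (C t) (X t) j \<Longrightarrow> dn (Suc t) j"
  using stopped_dn[of "Suc t" j] by (simp add: step_simps)

lemma stopped_nb: "stopped (X t) j \<Longrightarrow> E j' j \<Longrightarrow> dn t j'"
proof (induction t)
  case 0 then show ?case by (simp add: init_state_def)
next
  case (Suc t)
  then have "stopped (X t) j \<or> sends_stop E D (W t) (C t) (X t) j" by (simp add: step_simps)
  then show ?case
  proof
    assume "stopped (X t) j" then show ?thesis using Suc dn_stable[of t j' "Suc t"] by simp
  next
    assume "sends_stop E D (W t) (C t) (X t) j" then show ?thesis using stop_nb Suc by blast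
  qed
qed

lemma wake: "\<exists>s. t \<le> s \<and> s < t + Tbar j \<and> W s j" using wk by blast

lemma propag: "dn t j \<Longrightarrow> E j j' \<Longrightarrow> \<exists>s. dn s j'"
proof -
  assume d: "dn t j" and e: "E j j'"
  obtain s where s: "t \<le> s" "W s j" using wake by blast
  have ds: "dn s j" using dn_stable d s by blast
  show ?thesis
  proof (cases "stopped (X s) j")
    case True then show ?thesis using stopped_nb symE e by blast
  next
    case False
    then have "sends_stop E D (W s) (C s) (X s) j" using ds s aa_done unfolding dn_def sends_stop_def by metis
    then show ?thesis using stop_nb symE e by blast
  qed
qed

lemma spread: assumes "dn t j" shows "\<exists>s. dn s i"
proof -
  have "(j, i) \<in> (edges E)\<^sup>*" using conn unfolding connected_graph_def by blast
  then show ?thesis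
  proof (induction rule: rtrancl_induct)
    case base then show ?case using assms by blast
  next
    case (step y z) then show ?case using propag by (auto simp: edges_def)
  qed
qed

end

context la begin

abbreviation "A t \<equiv> after_awake E D (W t) (C t) (X t)"

definition Q :: "nat \<Rightarrow> nat \<Rightarrow> bool" where
  "Q l T \<longleftrightarrow> (\<forall>j b k. b \<in> nbrs E j \<and> 1 \<le> k \<and> k \<le> l \<longrightarrow> Smat (X T) j k b = 1)"

lemma Q_mono: "Q l T \<Longrightarrow> l \<le> D \<Longrightarrow> T \<le> T' \<Longrightarrow> Q l T'"
  unfolding Q_def using one_stable by (meson order_trans)

lemma nd_step:
  assumes nd: "\<forall>t j. \<not> dn t j"
  shows "Smat (X (Suc t)) j k b = (if E j b \<and> W t b \<and> 1 \<le> k \<and> k \<le> D then A t b k b else A t j k b)"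
proof -
  have ns: "\<And>j. \<not> stopped (X t) j" using nd stopped_dn by blast
  have nr: "\<And>j. \<not> stoprcv (X t) j" using nd rcv_dn by blast
  have nss: "\<And>j. \<not> sends_stop E D (W t) (C t) (X t) j" using nd stop_self by blast
  have sc: "\<And>b. sends_col E D (W t) (X t) b = W t b" using ns nd unfolding sends_col_def dn_def by blast
  show ?thesis using ns nr nss sc by (simp add: step_simps)
qed

lemma Q_step:
  assumes nd: "\<forall>t j. \<not> dn t j" and call: "\<forall>t j. t0 \<le> t \<longrightarrow> C t j = 1"
    and T: "t0 \<le> T" and q: "Q l T" and l: "l < D"
  shows "Q (Suc l) (T + Max (range Tbar))"
  unfolding Q_def
proof (intro allI impI, elim conjE)
  fix j b k assume bn: "b \<in> nbrs E j" and k: "1 \<le> k" "k \<le> Suc l"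
  show "Smat (X (T + Max (range Tbar))) j k b = 1"
  proof (cases "k \<le> l")
    case True
    then show ?thesis using Q_mono[OF q, of "T + Max (range Tbar)"] l bn k unfolding Q_def by auto
  next
    case False
    then have kl: "k = Suc l" using k by simp
    obtain s where s: "T \<le> s" "s < T + Tbar b" "W s b" using wake by blast
    have qs: "Q l s" using Q_mono[OF q _ s(1)] l by simp
    have cs: "C s b = 1" using call T s by simp
    have ndb: "\<not> dn s b" "\<not> stopped (X s) b" using nd stopped_dn by blast+
    have hq: "\<forall>b'\<in>nbrs E b. \<forall>k'. 1 \<le> k' \<and> k' \<le> l \<longrightarrow> Smat (X s) b k' b' = 1"
      using qs unfolding Q_def by blast
    have "newcol E b (C s b) (Smat (X s) b) (Suc l) = 1"
      using newcol_one[OF cs hq, of "Suc l"] by simp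
    then have a1: "A s b (Suc l) b = 1" using aa_recomp[of "W s" b "X s" E D "Suc l" "C s"] s ndb l
      unfolding dn_def by simp
    have "Smat (X (Suc s)) j (Suc l) b = 1"
    proof (cases "b = j")
      case True then show ?thesis using nd_step[OF nd] a1 irr by simp
    next
      case False then have "E j b" using bn by (simp add: nbrs_def)
      then show ?thesis using nd_step[OF nd] a1 s l by simp
    qed
    moreover have "Tbar b \<le> Max (range Tbar)" by (simp)
    then have "Suc s \<le> T + Max (range Tbar)" using s by linarith
    ultimately show ?thesis using one_stable[of "Suc s" j "Suc l" b "T + Max (range Tbar)"] kl l s
      by simp
  qed
qed

lemma Q_all:
  assumes nd: "\<forall>t j. \<not> dn t j" and call: "\<forall>t j. t0 \<le> t \<longrightarrow> C t j = 1"
  shows "l \<le> D \<Longrightarrow> \<exists>T. t0 \<le> T \<and> Q l T"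
proof (induction l)
  case 0 then show ?case unfolding Q_def by auto
next
  case (Suc l)
  then obtain T where "t0 \<le> T" "Q l T" by auto
  then show ?case using Q_step[OF nd call] Suc.prems by (metis Suc_le_lessD le_add1 order_trans)
qed

lemma liveness:
  assumes "\<forall>j. C t0 j = 1" shows "\<exists>t. dn t i"
proof (rule ccontr)
  assume "\<not> (\<exists>t. dn t i)"
  then have nd: "\<forall>t j. \<not> dn t j" using spread by blast
  have call: "\<forall>t j. t0 \<le> t \<longrightarrow> C t j = 1" using assms Cmono by blast
  obtain T where "Q D T" using Q_all[OF nd call] by blast
  then have "dn T i" unfolding dn_def prodrow_def Q_def using D1 by (simp add: prod_eq_1_iff)
  then show False using nd by blast
qed

lemma sfX: "sfm E D (\<lambda>x. \<exists>s. C s x = 1) (Smat (X t) j)"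
proof (induction t arbitrary: j)
  case 0 then show ?case by (simp add: sfm_def init_state_def)
next
  case (Suc t) then show ?case using sf_step[OF conn irr D1, of "\<lambda>x. \<exists>s. C s x = 1" "X t" "C t" "W t"] by auto
qed

lemma safety:
  assumes "dn t i" shows "\<exists>t. \<forall>j. C t j = 1"
proof -
  have "\<forall>x. \<exists>s. C s x = 1" using allF[OF conn D1 sfX] assms unfolding dn_def by blast
  then obtain f where f: "\<And>x. C (f x) x = 1" by metis
  have "\<forall>j. C (Max (range f)) j = 1" using f Cmono by (metis Max_ge finite_UNIV finite_imageI rangeI)
  then show ?thesis by blast
qed

end

theorem proposition1:
  fixes E :: "'v::finite \<Rightarrow> 'v \<Rightarrow> bool"
    and W :: "nat \<Rightarrow> 'v \<Rightarrow> bool"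
    and C :: "nat \<Rightarrow> 'v \<Rightarrow> nat"
    and Tbar :: "'v \<Rightarrow> nat"
    and i :: 'v
  assumes "undirected_graph E"
    and "connected_graph E"
    and "card (UNIV :: 'v set) \<ge> 2"
    and "\<forall>t j. C t j \<in> {0, 1}"
    and "\<forall>j. C 0 j = 0"
    and "\<forall>t s j. t \<le> s \<longrightarrow> C t j = 1 \<longrightarrow> C s j = 1"
    and "\<forall>j t. \<exists>s. t \<le> s \<and> s < t + Tbar j \<and> W s j"
  shows "(\<exists>t. prodrow E i (Smat (exec E (diam E) W C t) i) (diam E) = 1)
         \<longleftrightarrow> (\<exists>t. \<forall>j. C t j = 1)"
proof -
  interpret la E W C Tbar
    using assms by (unfold_locales) auto
  show ?thesis using safety liveness unfolding dn_def by blast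
qed

end
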